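(* Let $M$ be a Hausdorff space, let $E:\mathbb{R}\to\mathcal{T}(M)$ be a strongly regular spectral family, and let $x\in\mathcal{D}(E)$. Then for every quasipoint $\mathfrak{B}_x$ of $\mathcal{T}(M)$ over $x$, \[ f_E(\mathfrak{B}_x)=f_E(x), \] where $f_E(\mathfrak{B}_x):=\inf\{\lambda\in\mathbb{R}\mid E_\lambda\in\mathfrak{B}_x\}$ and $f_E(x):=\inf\{\lambda\in\mathbb{R}\mid x\in E_\lambda\}$.
   Context: $\mathcal{T}(M)$ is the lattice of open subsets of $M$ with $\bigwedge_\alpha U_\alpha=\mathrm{int}\bigcap_\alpha U_\alpha$. A spectral family in $\mathcal{T}(M)$ is a map $E:\mathbb{R}\to\mathcal{T}(M)$ with $E_\lambda\subseteq E_\mu$ for $\lambda\le\mu$, $E_\lambda=\bigwedge_{\mu>\lambda}E_\mu$, $\bigwedge_\lambda E_\lambda=\emptyset$, $\bigcup_\lambda E_\lambda=M$; it is strongly regular if $\overline{E_\lambda}\subseteq E_\mu$ for all $\lambda<\mu$. $\mathcal{D}(E)=\{x\in M\mid\exists\lambda:x\notin E_\lambda\}$. A quasipoint of $\mathcal{T}(M)$ is a maximal dual ideal (maximal nonempty family of open sets not containing $\emptyset$, upward closed, closed under finite intersections); it is over $x$ if $x\in\bigcap_{U\in\mathfrak{B}}\overline{U}$. *)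

theory Defs
  imports "HOL-Analysis.Analysis"
begin

text \<open>The space M is the whole type 'a, of class t2_space (Hausdorff).
  The lattice T(M) consists of the open subsets; its meet of a family is the
  interior of the intersection.\<close>

definition opens_meet :: "'a::topological_space set set \<Rightarrow> 'a set" where
  "opens_meet F = interior (\<Inter> F)"

definition spectral_family :: "(real \<Rightarrow> 'a::topological_space set) \<Rightarrow> bool" where
  "spectral_family E \<longleftrightarrow>
     (\<forall>l. open (E l)) \<and>
     (\<forall>l m. l \<le> m \<longrightarrow> E l \<subseteq> E m) \<and>
     (\<forall>l. E l = opens_meet {E m | m. m > l}) \<and>
     opens_meet (range E) = {} \<and>
     (\<Union>l. E l) = UNIV"

definition strongly_regular :: "(real \<Rightarrow> 'a::topological_space set) \<Rightarrow> bool" where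
  "strongly_regular E \<longleftrightarrow> (\<forall>l m. l < m \<longrightarrow> closure (E l) \<subseteq> E m)"

definition spec_domain :: "(real \<Rightarrow> 'a set) \<Rightarrow> 'a set" where
  "spec_domain E = {x. \<exists>l. x \<notin> E l}"

definition dual_ideal :: "'a::topological_space set set \<Rightarrow> bool" where
  "dual_ideal B \<longleftrightarrow>
     B \<noteq> {} \<and> (\<forall>U\<in>B. open U) \<and> {} \<notin> B \<and>
     (\<forall>U V. U \<in> B \<and> open V \<and> U \<subseteq> V \<longrightarrow> V \<in> B) \<and>
     (\<forall>U V. U \<in> B \<and> V \<in> B \<longrightarrow> U \<inter> V \<in> B)"

definition quasipoint :: "'a::topological_space set set \<Rightarrow> bool" where
  "quasipoint B \<longleftrightarrow> dual_ideal B \<and> (\<forall>C. dual_ideal C \<and> B \<subseteq> C \<longrightarrow> C = B)"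

definition quasipoint_over :: "'a::topological_space set set \<Rightarrow> 'a \<Rightarrow> bool" where
  "quasipoint_over B x \<longleftrightarrow> quasipoint B \<and> x \<in> (\<Inter>U\<in>B. closure U)"

definition fE_qp :: "(real \<Rightarrow> 'a set) \<Rightarrow> 'a set set \<Rightarrow> real" where
  "fE_qp E B = Inf {l. E l \<in> B}"

definition fE_pt :: "(real \<Rightarrow> 'a set) \<Rightarrow> 'a \<Rightarrow> real" where
  "fE_pt E x = Inf {l. x \<in> E l}"

end

theory Submission
  imports Defs
begin

lemma qp_contains:
  fixes B :: "'a::topological_space set set"
  assumes q: "quasipoint_over B x" and W: "open W" "x \<in> W"
  shows "W \<in> B"
proof -
  have qp: "quasipoint B" and xc: "\<And>U. U \<in> B \<Longrightarrow> x \<in> closure U"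
    using q unfolding quasipoint_over_def by auto
  have di: "dual_ideal B" and mx: "\<And>C. dual_ideal C \<Longrightarrow> B \<subseteq> C \<Longrightarrow> C = B"
    using qp unfolding quasipoint_def by auto
  have Bne: "B \<noteq> {}" using di unfolding dual_ideal_def by (elim conjE)
  have Bo: "\<And>U. U \<in> B \<Longrightarrow> open U" using di unfolding dual_ideal_def by (elim conjE) blast
  have Bi: "\<And>U V. U \<in> B \<Longrightarrow> V \<in> B \<Longrightarrow> U \<inter> V \<in> B"
    using di unfolding dual_ideal_def by (elim conjE) blast
  define C where "C = {V. open V \<and> (\<exists>U\<in>B. U \<inter> W \<subseteq> V)}"
  have nz: "U \<inter> W \<noteq> {}" if "U \<in> B" for U
  proof
    assume "U \<inter> W = {}"
    then have "W \<inter> closure U = {}" using open_Int_closure_eq_empty[OF W(1)] by (simp add: Int_commute)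
    then show False using xc[OF that] W(2) by auto
  qed
  have "dual_ideal C"
    unfolding dual_ideal_def
  proof (intro conjI allI impI ballI)
    obtain U where "U \<in> B" using Bne by auto
    then show "C \<noteq> {}" unfolding C_def by blast
  next
    show "\<And>U. U \<in> C \<Longrightarrow> open U" unfolding C_def by auto
  next
    show "{} \<notin> C" unfolding C_def using nz by blast
  next
    fix U V assume "U \<in> C \<and> open V \<and> U \<subseteq> V"
    then show "V \<in> C" unfolding C_def by blast
  next
    fix U V assume a: "U \<in> C \<and> V \<in> C"
    then obtain U1 U2 where "U1 \<in> B" "U2 \<in> B" "U1 \<inter> W \<subseteq> U" "U2 \<inter> W \<subseteq> V"
      unfolding C_def by blast
    moreover have "U1 \<inter> U2 \<in> B" using Bi calculation by blast
    ultimately show "U \<inter> V \<in> C" using a unfolding C_def by blast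
  qed
  moreover have "B \<subseteq> C" unfolding C_def using Bo by blast
  ultimately have "C = B" using mx by blast
  moreover have "W \<in> C" unfolding C_def using W Bne by blast
  ultimately show ?thesis by simp
qed

theorem proposition2p44:
  fixes E :: "real \<Rightarrow> 'a::t2_space set" and x :: 'a and B :: "'a set set"
  assumes "spectral_family E" and "strongly_regular E"
    and "x \<in> spec_domain E"
    and "quasipoint_over B x"
  shows "fE_qp E B = fE_pt E x"
proof -
  have op: "\<And>l. open (E l)" using assms(1) unfolding spectral_family_def by (elim conjE) blast
  have mono: "\<And>l m. l \<le> m \<Longrightarrow> E l \<subseteq> E m" using assms(1) unfolding spectral_family_def by (elim conjE) blast
  have un: "(\<Union>l. E l) = UNIV" using assms(1) unfolding spectral_family_def by (elim conjE)
  have sr: "\<And>l m. l < m \<Longrightarrow> closure (E l) \<subseteq> E m"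
    using assms(2) unfolding strongly_regular_def by auto
  have xc: "\<And>U. U \<in> B \<Longrightarrow> x \<in> closure U"
    using assms(4) unfolding quasipoint_over_def by auto
  obtain l0 where l0: "x \<notin> E l0" using assms(3) unfolding spec_domain_def by auto
  define S where "S = {l. x \<in> E l}"
  have Sne: "S \<noteq> {}" using un unfolding S_def by auto
  have Sb: "l0 \<le> l" if "l \<in> S" for l
  proof (rule ccontr)
    assume "\<not> l0 \<le> l" then have "E l \<subseteq> E l0" using mono by simp
    then show False using that l0 unfolding S_def by auto
  qed
  have bdd: "bdd_below S" using Sb by (rule bdd_belowI)
  define f where "f = Inf S"
  have up: "E l \<in> B" if "f < l" for l
  proof -
    have "Inf S < l" using that unfolding f_def .
    then obtain m where "m \<in> S" "m < l" using cInf_less_iff[OF Sne bdd] by blast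
    then have "x \<in> E l" using mono[of m l] unfolding S_def by auto
    then show ?thesis using qp_contains[OF assms(4) op] by blast
  qed
  have down: "E l \<notin> B" if lf: "l < f" for l
  proof
    assume "E l \<in> B"
    then have xl: "x \<in> closure (E l)" using xc by blast
    obtain m where m: "l < m" "m < f" using dense[OF lf] by blast
    have "m \<notin> S"
    proof
      assume "m \<in> S" then have "f \<le> m" using cInf_lower[OF _ bdd] unfolding f_def by blast
      then show False using m(2) by linarith
    qed
    moreover have "x \<in> E m" using sr[OF m(1)] xl by auto
    ultimately show False unfolding S_def by auto
  qed
  define T where "T = {l. E l \<in> B}"
  have Tne: "T \<noteq> {}" using up[of "f+1"] unfolding T_def by auto
  have Tlow: "f \<le> t" if "t \<in> T" for t
  proof (rule ccontr)
    assume "\<not> f \<le> t" then have "t < f" by linarith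
    then show False using down that unfolding T_def by blast
  qed
  have bddT: "bdd_below T" using Tlow by (rule bdd_belowI)
  have "Inf T \<ge> f" using cInf_greatest[OF Tne] Tlow by blast
  moreover have "Inf T \<le> f"
  proof (rule field_le_epsilon)
    fix e :: real assume "0 < e"
    then have "f + e \<in> T" using up unfolding T_def by auto
    then show "Inf T \<le> f + e" using cInf_lower[OF _ bddT] by blast
  qed
  ultimately have "Inf T = f" by simp
  then show ?thesis unfolding fE_qp_def fE_pt_def T_def f_def S_def by simp
qed

end
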